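(* Let $Q\subset\mathrm{EX}(M)$ be a countable set of pairwise compatible extensions such that for each $(\alpha,U)\in Q$ the set $N_{(\alpha,U)}$ is a manifold with boundary. Then $Q(M)$ is a topological manifold with boundary.
   Context: Conventions: $M$ is an $n$-dimensional smooth manifold (Hausdorff, second countable) with maximal $C^\infty$ atlas $\mathcal{A}(M)$; every chart $\alpha$ has open domain $\mathrm{dom}(\alpha)\subset M$ and open range $\mathrm{ran}(\alpha)\subset\mathbb{R}^n$. For $A\subset\mathbb{R}^n$, $\partial A$ is its boundary in $\mathbb{R}^n$; for $A\subset U\subset\mathbb{R}^n$, $\partial_U A$ is the boundary of $A$ relative to $U$. A (topological) manifold with boundary is a second countable Hausdorff space locally homeomorphic to $\mathbb{R}^{n-1}\times[0,\infty)$. An admissible boundary point of $\alpha$ is a $p\in\partial\,\mathrm{ran}(\alpha)$ such that every sequence $(x_i)\subset\mathrm{dom}(\alpha)$ with $\alpha(x_i)\to p$ has no accumulation point in $M$; $B(\alpha)$ is the set of these. An extension is a pair $(\alpha,U)$, $U\subset\mathbb{R}^n$ open, $\mathrm{ran}(\alpha)\subset U$, $\emptyset\ne\partial_U\mathrm{ran}(\alpha)\subset B(\alpha)$; $\mathrm{EX}(M)$ is the set of extensions. A boundary set is $(\alpha,U,V)$ with $(\alpha,U)\in\mathrm{EX}(M)$, $V\subset B(\alpha)\cap U$ (a boundary point if $V=\{p\}$). $(\alpha,U,V)$ covers $(\beta,X,Y)$ if for every sequence $(y_i)\subset\mathrm{dom}(\beta)$ with $(\beta(y_i))$ having an accumulation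 point in $Y$ there is a subsequence $(v_i)\subset\mathrm{dom}(\alpha)$ of $(y_i)$ with $(\alpha(v_i))$ having an accumulation point in $V$; they are equivalent, $\equiv$, if each covers the other. Boundary points $(\alpha,U,\{p\})$, $(\beta,X,\{q\})$ are in contact if there is a sequence $(x_i)\subset\mathrm{dom}(\alpha)\cap\mathrm{dom}(\beta)$ with $\alpha(x_i)\to p$ and $\beta(x_i)\to q$. Extensions $(\alpha,U)$, $(\beta,X)$ are compatible if for all $p\in B(\alpha)\cap U$, $q\in B(\beta)\cap X$, being in contact implies $(\alpha,U,\{p\})\equiv(\beta,X,\{q\})$. Completion: for $Q\subset\mathrm{EX}(M)$ let $P=\{(\alpha,\mathrm{ran}(\alpha)):\alpha\in\mathcal{A}(M)\}$, $S_Q=P\cup Q$, $N_{(\alpha,U)}=\mathrm{ran}(\alpha)\cup\partial_U\mathrm{ran}(\alpha)$ with subspace topology of $\mathbb{R}^n$, $N_Q=\bigsqcup_{(\alpha,U)\in S_Q}N_{(\alpha,U)}$ with disjoint-union topology. Identify $x\in N_{(\alpha,U)}$ with $y\in N_{(\beta,X)}$ iff either $x\in\mathrm{ran}(\alpha)$, $y\in\mathrm{ran}(\beta)$, $\beta\circ\alpha^{-1}(x)=y$, or $x\in\partial_U\mathrm{ran}(\alpha)$, $y\in\partial_X\mathrm{ran}(\beta)$, $(\alpha,U,\{x\})\equiv(\beta,X,\{y\})$. $Q(M)$ is the quotient space with the quotient topology. *)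

theory Defs
  imports "HOL-Analysis.Analysis"
begin

text \<open>A map is C-infinity on an open set U iff it is differentiable on U and all its
  directional derivatives (as functions of the base point) are again C-infinity on U;
  i.e. it is differentiable of all orders (which implies continuity of all derivatives).\<close>
coinductive smooth_on :: "('a::real_normed_vector \<Rightarrow> 'b::real_normed_vector) \<Rightarrow> 'a set \<Rightarrow> bool"
  where
  "f differentiable_on U \<Longrightarrow> (\<forall>v. smooth_on (\<lambda>x. frechet_derivative f (at x) v) U)
     \<Longrightarrow> smooth_on f U"

type_synonym ('a, 'n) chart = "'a set \<times> ('a \<Rightarrow> real^'n)"

definition dom_c :: "('a, 'n) chart \<Rightarrow> 'a set" where "dom_c c = fst c"
definition map_c :: "('a, 'n) chart \<Rightarrow> 'a \<Rightarrow> real^'n" where "map_c c = snd c"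
definition ran_c :: "('a, 'n) chart \<Rightarrow> (real^'n) set" where "ran_c c = map_c c ` dom_c c"

definition is_chart :: "('a::topological_space, 'n::finite) chart \<Rightarrow> bool" where
  "is_chart c \<longleftrightarrow> open (dom_c c) \<and> open (ran_c c) \<and>
     (\<exists>g. homeomorphism (dom_c c) (ran_c c) (map_c c) g)"

definition smooth_compat :: "('a::topological_space, 'n::finite) chart \<Rightarrow> ('a, 'n) chart \<Rightarrow> bool" where
  "smooth_compat c d \<longleftrightarrow>
     smooth_on (\<lambda>z. map_c d (inv_into (dom_c c) (map_c c) z)) (map_c c ` (dom_c c \<inter> dom_c d)) \<and>
     smooth_on (\<lambda>z. map_c c (inv_into (dom_c d) (map_c d) z)) (map_c d ` (dom_c c \<inter> dom_c d))"

definition smooth_atlas :: "('a::topological_space, 'n::finite) chart set \<Rightarrow> bool" where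
  "smooth_atlas A \<longleftrightarrow> (\<forall>c\<in>A. is_chart c) \<and> (\<Union>c\<in>A. dom_c c) = UNIV \<and>
     (\<forall>c\<in>A. \<forall>d\<in>A. smooth_compat c d)"

text \<open>The maximal C-infinity atlas of an n-dimensional smooth manifold structure on the
  (Hausdorff, second countable) space 'a; n = CARD('n).\<close>
definition maximal_smooth_atlas :: "('a::topological_space, 'n::finite) chart set \<Rightarrow> bool" where
  "maximal_smooth_atlas A \<longleftrightarrow> smooth_atlas A \<and>
     (\<forall>c. is_chart c \<and> (\<forall>d\<in>A. smooth_compat c d) \<longrightarrow> c \<in> A)"

definition seq_acc :: "(nat \<Rightarrow> 'b::topological_space) \<Rightarrow> 'b \<Rightarrow> bool" where
  "seq_acc x y \<longleftrightarrow> (\<forall>V. open V \<and> y \<in> V \<longrightarrow> infinite {i. x i \<in> V})"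

definition rel_bdry :: "(real^'n) set \<Rightarrow> (real^'n) set \<Rightarrow> (real^'n) set" where
  "rel_bdry U A = (subtopology euclidean U) frontier_of A"

definition adm_bdry :: "('a::topological_space, 'n::finite) chart \<Rightarrow> (real^'n) set" where
  "adm_bdry \<alpha> = {p \<in> frontier (ran_c \<alpha>).
     \<forall>x. (\<forall>i. x i \<in> dom_c \<alpha>) \<and> ((\<lambda>i. map_c \<alpha> (x i)) \<longlonglongrightarrow> p) \<longrightarrow> (\<nexists>y. seq_acc x y)}"

definition EXT :: "('a::topological_space, 'n::finite) chart set \<Rightarrow> (('a, 'n) chart \<times> (real^'n) set) set" where
  "EXT A = {(\<alpha>, U). \<alpha> \<in> A \<and> open U \<and> ran_c \<alpha> \<subseteq> U \<and>
             rel_bdry U (ran_c \<alpha>) \<noteq> {} \<and> rel_bdry U (ran_c \<alpha>) \<subseteq> adm_bdry \<alpha>}"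

definition boundary_set :: "('a::topological_space, 'n::finite) chart set \<Rightarrow>
     ('a, 'n) chart \<Rightarrow> (real^'n) set \<Rightarrow> (real^'n) set \<Rightarrow> bool" where
  "boundary_set A \<alpha> U V \<longleftrightarrow> (\<alpha>, U) \<in> EXT A \<and> V \<subseteq> adm_bdry \<alpha> \<inter> U"

definition covers :: "('a::topological_space, 'n::finite) chart \<Rightarrow> (real^'n) set \<Rightarrow> (real^'n) set \<Rightarrow>
     ('a, 'n) chart \<Rightarrow> (real^'n) set \<Rightarrow> (real^'n) set \<Rightarrow> bool" where
  "covers \<alpha> U V \<beta> X Y \<longleftrightarrow>
     (\<forall>y. (\<forall>i. y i \<in> dom_c \<beta>) \<and> (\<exists>z\<in>Y. seq_acc (\<lambda>i. map_c \<beta> (y i)) z) \<longrightarrow>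
        (\<exists>r. strict_mono r \<and> (\<forall>i. y (r i) \<in> dom_c \<alpha>) \<and>
             (\<exists>z\<in>V. seq_acc (\<lambda>i. map_c \<alpha> (y (r i))) z)))"

definition bequiv :: "('a::topological_space, 'n::finite) chart \<Rightarrow> (real^'n) set \<Rightarrow> (real^'n) set \<Rightarrow>
     ('a, 'n) chart \<Rightarrow> (real^'n) set \<Rightarrow> (real^'n) set \<Rightarrow> bool" where
  "bequiv \<alpha> U V \<beta> X Y \<longleftrightarrow> covers \<alpha> U V \<beta> X Y \<and> covers \<beta> X Y \<alpha> U V"

definition in_contact :: "('a::topological_space, 'n::finite) chart \<Rightarrow> real^'n \<Rightarrow>
     ('a, 'n) chart \<Rightarrow> real^'n \<Rightarrow> bool" where
  "in_contact \<alpha> p \<beta> q \<longleftrightarrow>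
     (\<exists>x. (\<forall>i. x i \<in> dom_c \<alpha> \<inter> dom_c \<beta>) \<and>
          ((\<lambda>i. map_c \<alpha> (x i)) \<longlonglongrightarrow> p) \<and> ((\<lambda>i. map_c \<beta> (x i)) \<longlonglongrightarrow> q))"

definition compatible_ext :: "('a::topological_space, 'n::finite) chart \<times> (real^'n) set \<Rightarrow>
     ('a, 'n) chart \<times> (real^'n) set \<Rightarrow> bool" where
  "compatible_ext e1 e2 \<longleftrightarrow> (case e1 of (\<alpha>, U) \<Rightarrow> case e2 of (\<beta>, X) \<Rightarrow>
     (\<forall>p \<in> adm_bdry \<alpha> \<inter> U. \<forall>q \<in> adm_bdry \<beta> \<inter> X.
        in_contact \<alpha> p \<beta> q \<longrightarrow> bequiv \<alpha> U {p} \<beta> X {q}))"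

definition N_ext :: "('a, 'n) chart \<times> (real^'n) set \<Rightarrow> (real^'n) set" where
  "N_ext e = (case e of (\<alpha>, U) \<Rightarrow> ran_c \<alpha> \<union> rel_bdry U (ran_c \<alpha>))"

definition N_top :: "('a, 'n) chart \<times> (real^'n) set \<Rightarrow> (real^'n) topology" where
  "N_top e = subtopology euclidean (N_ext e)"

definition S_Q :: "('a::topological_space, 'n::finite) chart set \<Rightarrow>
     (('a, 'n) chart \<times> (real^'n) set) set \<Rightarrow> (('a, 'n) chart \<times> (real^'n) set) set" where
  "S_Q A Q = {(\<alpha>, ran_c \<alpha>) | \<alpha>. \<alpha> \<in> A} \<union> Q"

definition N_Q :: "('a::topological_space, 'n::finite) chart set \<Rightarrow>
     (('a, 'n) chart \<times> (real^'n) set) set \<Rightarrow> ((('a, 'n) chart \<times> (real^'n) set) \<times> (real^'n)) topology" where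
  "N_Q A Q = sum_topology N_top (S_Q A Q)"

definition ident :: "('a::topological_space, 'n::finite) chart set \<Rightarrow>
     (('a, 'n) chart \<times> (real^'n) set) set \<Rightarrow>
     ((('a, 'n) chart \<times> (real^'n) set) \<times> (real^'n)) rel" where
  "ident A Q = {(((\<alpha>, U), x), ((\<beta>, X), y)).
      ((\<alpha>, U), x) \<in> topspace (N_Q A Q) \<and> ((\<beta>, X), y) \<in> topspace (N_Q A Q) \<and>
      ((x \<in> ran_c \<alpha> \<and> y \<in> ran_c \<beta> \<and>
          (\<exists>m \<in> dom_c \<alpha> \<inter> dom_c \<beta>. map_c \<alpha> m = x \<and> map_c \<beta> m = y)) \<or>
       (x \<in> rel_bdry U (ran_c \<alpha>) \<and> y \<in> rel_bdry X (ran_c \<beta>) \<and>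
          bequiv \<alpha> U {x} \<beta> X {y}))}"

definition quotient_topology :: "'b topology \<Rightarrow> 'b rel \<Rightarrow> 'b set topology" where
  "quotient_topology X r =
     topology (\<lambda>W. W \<subseteq> topspace X // ((r \<union> r\<inverse>)\<^sup>*) \<and> openin X (topspace X \<inter> \<Union>W))"

definition Q_M :: "('a::topological_space, 'n::finite) chart set \<Rightarrow>
     (('a, 'n) chart \<times> (real^'n) set) set \<Rightarrow>
     ((('a, 'n) chart \<times> (real^'n) set) \<times> (real^'n)) set topology" where
  "Q_M A Q = quotient_topology (N_Q A Q) (ident A Q)"

definition halfspace :: "'n::finite \<Rightarrow> (real^'n) set" where
  "halfspace k = {x. 0 \<le> x $ k}"

text \<open>Second countable Hausdorff space locally homeomorphic to the closed half space
  R^(n-1) x [0,oo) (realised as {x in R^n. x_k \<ge> 0}), n = CARD('n).\<close>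
definition manifold_with_boundary :: "('n::finite) itself \<Rightarrow> 'b topology \<Rightarrow> bool" where
  "manifold_with_boundary TYPE('n::finite) X \<longleftrightarrow>
     Hausdorff_space X \<and> second_countable X \<and>
     (\<exists>k::'n. \<forall>p \<in> topspace X. \<exists>W. openin X W \<and> p \<in> W \<and>
        (\<exists>V. openin (subtopology euclidean (halfspace k)) V \<and>
             subtopology X W homeomorphic_space subtopology euclidean V))"

end

theory Submission
  imports Defs
begin

lemma R_sym:
  assumes "(x,y) \<in> (r \<union> r\<inverse>)\<^sup>*" shows "(y,x) \<in> (r \<union> r\<inverse>)\<^sup>*"
proof -
  have "(y,x) \<in> ((r \<union> r\<inverse>)\<inverse>)\<^sup>*" using assms by (simp add: rtrancl_converse)
  moreover have "(r \<union> r\<inverse>)\<inverse> = r \<union> r\<inverse>" by auto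
  ultimately show ?thesis by simp
qed

lemma R_class_eq:
  assumes "(a,b) \<in> (r \<union> r\<inverse>)\<^sup>*" shows "(r \<union> r\<inverse>)\<^sup>* `` {a} = (r \<union> r\<inverse>)\<^sup>* `` {b}"
  using assms R_sym[OF assms] by (auto intro: rtrancl_trans)

lemma istopology_qt:
  "istopology (\<lambda>W. W \<subseteq> topspace X // ((r \<union> r\<inverse>)\<^sup>*) \<and> openin X (topspace X \<inter> \<Union>W))"
proof -
  have I: "S \<inter> T \<subseteq> topspace X // (r \<union> r\<inverse>)\<^sup>* \<and> openin X (topspace X \<inter> \<Union> (S \<inter> T))"
    if S: "S \<subseteq> topspace X // (r \<union> r\<inverse>)\<^sup>* \<and> openin X (topspace X \<inter> \<Union> S)"
    and T: "T \<subseteq> topspace X // (r \<union> r\<inverse>)\<^sup>* \<and> openin X (topspace X \<inter> \<Union> T)" for S T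
  proof -
  have eq: "topspace X \<inter> \<Union>(S \<inter> T) = (topspace X \<inter> \<Union> S) \<inter> (topspace X \<inter> \<Union> T)"
  proof
    show "(topspace X \<inter> \<Union> S) \<inter> (topspace X \<inter> \<Union> T) \<subseteq> topspace X \<inter> \<Union>(S \<inter> T)"
    proof
      fix x assume "x \<in> (topspace X \<inter> \<Union> S) \<inter> (topspace X \<inter> \<Union> T)"
      then obtain c1 c2 where c: "x \<in> c1" "c1 \<in> S" "x \<in> c2" "c2 \<in> T" "x \<in> topspace X" by auto
      obtain a where a: "c1 = (r \<union> r\<inverse>)\<^sup>* `` {a}" using c S by (auto simp: quotient_def)
      obtain b where b: "c2 = (r \<union> r\<inverse>)\<^sup>* `` {b}" using c T by (auto simp: quotient_def)
      have "c1 = (r \<union> r\<inverse>)\<^sup>* `` {x}" using a c R_class_eq by fastforce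
      moreover have "c2 = (r \<union> r\<inverse>)\<^sup>* `` {x}" using b c R_class_eq by fastforce
      ultimately show "x \<in> topspace X \<inter> \<Union>(S \<inter> T)" using c by auto
    qed
  qed auto
  show ?thesis
    using S T eq by auto
  qed
  have U: "\<Union>K \<subseteq> topspace X // (r \<union> r\<inverse>)\<^sup>* \<and> openin X (topspace X \<inter> \<Union>(\<Union>K))"
    if K: "\<forall>W\<in>K. W \<subseteq> topspace X // (r \<union> r\<inverse>)\<^sup>* \<and> openin X (topspace X \<inter> \<Union> W)" for K
  proof -
  have e: "topspace X \<inter> \<Union>(\<Union>K) = \<Union>((\<lambda>W. topspace X \<inter> \<Union> W) ` K)" by auto
  have "openin X (\<Union>((\<lambda>W. topspace X \<inter> \<Union> W) ` K))"
    using K by (intro openin_Union) auto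
  then show ?thesis
    using K e by auto
  qed
  show ?thesis unfolding istopology_def using I U by blast
qed

lemma openin_qt:
  "openin (quotient_topology X r) W \<longleftrightarrow> W \<subseteq> topspace X // ((r \<union> r\<inverse>)\<^sup>*) \<and> openin X (topspace X \<inter> \<Union>W)"
  unfolding quotient_topology_def topology_inverse'[OF istopology_qt] ..

lemma Union_quotient_sub: "\<Union>(T // (r \<union> r\<inverse>)\<^sup>*) \<supseteq> T"
  by (auto simp: quotient_def)

lemma topspace_qt: "topspace (quotient_topology X r) = topspace X // ((r \<union> r\<inverse>)\<^sup>*)"
proof -
  have "openin (quotient_topology X r) (topspace X // ((r \<union> r\<inverse>)\<^sup>*))"
    unfolding openin_qt using Union_quotient_sub[of "topspace X" r]
    by (simp add: inf.absorb1)
  then show ?thesis using openin_subset[of "quotient_topology X r"] openin_qt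
    by (metis openin_topspace subset_antisym)
qed

lemma cls_in_quotient: "u \<in> T \<Longrightarrow> (r \<union> r\<inverse>)\<^sup>* `` {u} \<in> T // ((r \<union> r\<inverse>)\<^sup>*)"
  by (auto simp: quotient_def)

lemma continuous_map_cls:
  "continuous_map X (quotient_topology X r) (\<lambda>u. (r \<union> r\<inverse>)\<^sup>* `` {u})"
  unfolding continuous_map_def
proof (intro conjI allI impI)
  show "(\<lambda>u. (r \<union> r\<inverse>)\<^sup>* `` {u}) \<in> topspace X \<rightarrow> topspace (quotient_topology X r)"
    by (auto simp: topspace_qt quotient_def)
  fix W assume W: "openin (quotient_topology X r) W"
  have "{x \<in> topspace X. (r \<union> r\<inverse>)\<^sup>* `` {x} \<in> W} = topspace X \<inter> \<Union>W"
  proof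
    show "topspace X \<inter> \<Union> W \<subseteq> {x \<in> topspace X. (r \<union> r\<inverse>)\<^sup>* `` {x} \<in> W}"
    proof
      fix x assume x: "x \<in> topspace X \<inter> \<Union> W"
      then obtain c where c: "x \<in> c" "c \<in> W" by auto
      then obtain a where a: "c = (r \<union> r\<inverse>)\<^sup>* `` {a}" using W by (auto simp: openin_qt quotient_def)
      then have "c = (r \<union> r\<inverse>)\<^sup>* `` {x}" using c R_class_eq by fastforce
      then show "x \<in> {x \<in> topspace X. (r \<union> r\<inverse>)\<^sup>* `` {x} \<in> W}" using x c by auto
    qed
  qed auto
  then show "openin X {x \<in> topspace X. (r \<union> r\<inverse>)\<^sup>* `` {x} \<in> W}" using W by (simp add: openin_qt)
qed

lemma openin_qt_image:
  assumes "S \<subseteq> topspace X" "openin X (topspace X \<inter> (r \<union> r\<inverse>)\<^sup>* `` S)"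
  shows "openin (quotient_topology X r) ((\<lambda>u. (r \<union> r\<inverse>)\<^sup>* `` {u}) ` S)"
  unfolding openin_qt
proof
  show "(\<lambda>u. (r \<union> r\<inverse>)\<^sup>* `` {u}) ` S \<subseteq> topspace X // (r \<union> r\<inverse>)\<^sup>*"
    using assms(1) by (auto simp: quotient_def)
  have "\<Union>((\<lambda>u. (r \<union> r\<inverse>)\<^sup>* `` {u}) ` S) = (r \<union> r\<inverse>)\<^sup>* `` S" by auto
  then show "openin X (topspace X \<inter> \<Union> ((\<lambda>u. (r \<union> r\<inverse>)\<^sup>* `` {u}) ` S))" using assms(2) by simp
qed

lemma second_countable_euclidean: "second_countable (euclidean :: 'x::second_countable_topology topology)"
proof -
  obtain B :: "'x set set" where B: "countable B" "\<And>C. C \<in> B \<Longrightarrow> open C"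
      "\<And>S. open S \<Longrightarrow> \<exists>U. U \<subseteq> B \<and> S = \<Union>U"
    using univ_second_countable by blast
  show ?thesis unfolding second_countable_def
  proof (intro exI conjI allI impI)
    show "countable B" by fact
    show "\<forall>V\<in>B. openin euclidean V" using B by simp
    fix U :: "'x set" and x :: 'x assume "openin euclidean U \<and> x \<in> U"
    then obtain W where "W \<subseteq> B" "U = \<Union>W" "x \<in> U" using B(3) by auto
    then show "\<exists>V\<in>B. x \<in> V \<and> V \<subseteq> U" by auto
  qed
qed

lemma seq_acc_lim_unique:
  fixes g :: "nat \<Rightarrow> 'b::t2_space"
  assumes "seq_acc g z" "g \<longlonglongrightarrow> x" shows "z = x"
proof (rule ccontr)
  assume "z \<noteq> x"
  then obtain V W where VW: "open V" "open W" "z \<in> V" "x \<in> W" "V \<inter> W = {}"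
    using hausdorff[OF \<open>z \<noteq> x\<close>] by blast
  then have "eventually (\<lambda>i. g i \<in> W) sequentially" using assms(2) by (simp add: tendsto_def)
  then obtain N where N: "\<And>i. i \<ge> N \<Longrightarrow> g i \<in> W" by (auto simp: eventually_sequentially)
  have "{i. g i \<in> V} \<subseteq> {..<N}"
  proof
    fix i assume i: "i \<in> {i. g i \<in> V}"
    show "i \<in> {..<N}"
    proof (rule ccontr)
      assume "i \<notin> {..<N}"
      then have "g i \<in> W" using N by simp
      then show False using i VW(5) by blast
    qed
  qed
  then have "finite {i. g i \<in> V}" using finite_subset by blast
  then show False using assms(1) VW unfolding seq_acc_def by blast
qed

lemma seq_acc_subseq_lim:
  fixes g :: "nat \<Rightarrow> 'b::t2_space"
  assumes "seq_acc (g \<circ> r) z" "g \<longlonglongrightarrow> x" "strict_mono r" shows "z = x"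
  using seq_acc_lim_unique[OF assms(1)] LIMSEQ_subseq_LIMSEQ[OF assms(2,3)] by blast

lemma lim_imp_seq_acc:
  assumes "g \<longlonglongrightarrow> x" shows "seq_acc g x"
  unfolding seq_acc_def
proof (intro allI impI)
  fix V assume "open V \<and> x \<in> V"
  then have "eventually (\<lambda>i. g i \<in> V) sequentially" using assms by (simp add: tendsto_def)
  then obtain N where N: "\<And>i. i \<ge> N \<Longrightarrow> g i \<in> V" by (auto simp: eventually_sequentially)
  have "{N..} \<subseteq> {i. g i \<in> V}" using N by auto
  then show "infinite {i. g i \<in> V}" using infinite_Ici finite_subset by blast
qed

lemma covers_refl: "covers \<alpha> U V \<alpha> U V"
  unfolding covers_def
proof (intro allI impI)
  fix y assume "(\<forall>i. y i \<in> dom_c \<alpha>) \<and> (\<exists>z\<in>V. seq_acc (\<lambda>i. map_c \<alpha> (y i)) z)"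
  then show "\<exists>r. strict_mono r \<and> (\<forall>i. y (r i) \<in> dom_c \<alpha>) \<and> (\<exists>z\<in>V. seq_acc (\<lambda>i. map_c \<alpha> (y (r i))) z)"
    by (intro exI[of _ id]) (simp add: strict_mono_def)
qed

lemma covers_trans:
  assumes "covers \<alpha> U V \<beta> X Y" "covers \<beta> X Y \<gamma> Z W"
  shows "covers \<alpha> U V \<gamma> Z W"
  unfolding covers_def
proof (intro allI impI)
  fix y assume y: "(\<forall>i. y i \<in> dom_c \<gamma>) \<and> (\<exists>z\<in>W. seq_acc (\<lambda>i. map_c \<gamma> (y i)) z)"
  then obtain r where r: "strict_mono r" "\<forall>i. y (r i) \<in> dom_c \<beta>" "\<exists>z\<in>Y. seq_acc (\<lambda>i. map_c \<beta> (y (r i))) z"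
    using assms(2) unfolding covers_def by blast
  then have "(\<forall>i. (y \<circ> r) i \<in> dom_c \<beta>) \<and> (\<exists>z\<in>Y. seq_acc (\<lambda>i. map_c \<beta> ((y \<circ> r) i)) z)"
    by simp
  then obtain r' where r': "strict_mono r'" "\<forall>i. (y \<circ> r) (r' i) \<in> dom_c \<alpha>"
     "\<exists>z\<in>V. seq_acc (\<lambda>i. map_c \<alpha> ((y \<circ> r) (r' i))) z"
    using assms(1)[unfolded covers_def, rule_format] by blast
  show "\<exists>r. strict_mono r \<and> (\<forall>i. y (r i) \<in> dom_c \<alpha>) \<and> (\<exists>z\<in>V. seq_acc (\<lambda>i. map_c \<alpha> (y (r i))) z)"
    apply (rule exI[of _ "r \<circ> r'"])
    using r r' by (auto simp: strict_mono_def)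
qed

lemma bequiv_refl: "bequiv \<alpha> U V \<alpha> U V"
  by (simp add: bequiv_def covers_refl)

lemma bequiv_sym: "bequiv \<alpha> U V \<beta> X Y \<Longrightarrow> bequiv \<beta> X Y \<alpha> U V"
  by (simp add: bequiv_def)

lemma bequiv_trans: "bequiv \<alpha> U V \<beta> X Y \<Longrightarrow> bequiv \<beta> X Y \<gamma> Z W \<Longrightarrow> bequiv \<alpha> U V \<gamma> Z W"
  unfolding bequiv_def using covers_trans by blast

lemma rel_bdry_eq:
  assumes "open U" "open S" "S \<subseteq> U"
  shows "rel_bdry U S = U \<inter> closure S - S"
proof -
  have "rel_bdry U S = U \<inter> frontier S"
    unfolding rel_bdry_def using assms(1) by (simp add: frontier_of_subtopology_open)
  also have "\<dots> = U \<inter> closure S - S" using assms(2) by (simp add: frontier_def interior_open) blast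
  finally show ?thesis .
qed

definition pt :: "('a, 'n) chart \<Rightarrow> real^'n \<Rightarrow> 'a" where
  "pt \<alpha> x = inv_into (dom_c \<alpha>) (map_c \<alpha>) x"

lemma chart_facts:
  assumes "is_chart \<alpha>"
  shows "open (dom_c \<alpha>)" "open (ran_c \<alpha>)" "continuous_on (dom_c \<alpha>) (map_c \<alpha>)"
    "continuous_on (ran_c \<alpha>) (pt \<alpha>)" "\<And>m. m \<in> dom_c \<alpha> \<Longrightarrow> pt \<alpha> (map_c \<alpha> m) = m"
    "\<And>m. m \<in> dom_c \<alpha> \<Longrightarrow> map_c \<alpha> m \<in> ran_c \<alpha>"
    "\<And>x. x \<in> ran_c \<alpha> \<Longrightarrow> pt \<alpha> x \<in> dom_c \<alpha>"
    "\<And>x. x \<in> ran_c \<alpha> \<Longrightarrow> map_c \<alpha> (pt \<alpha> x) = x"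
proof -
  obtain g where g: "homeomorphism (dom_c \<alpha>) (ran_c \<alpha>) (map_c \<alpha>) g"
    using assms is_chart_def by blast
  have inj: "inj_on (map_c \<alpha>) (dom_c \<alpha>)" using g unfolding homeomorphism_def by (intro inj_on_inverseI[of _ g]) auto
  show "open (dom_c \<alpha>)" "open (ran_c \<alpha>)" using assms unfolding is_chart_def by auto
  show "continuous_on (dom_c \<alpha>) (map_c \<alpha>)" using g homeomorphism_def by blast
  show pf: "\<And>m. m \<in> dom_c \<alpha> \<Longrightarrow> pt \<alpha> (map_c \<alpha> m) = m" using inj by (simp add: pt_def)
  show "\<And>m. m \<in> dom_c \<alpha> \<Longrightarrow> map_c \<alpha> m \<in> ran_c \<alpha>" by (simp add: ran_c_def)
  show "\<And>x. x \<in> ran_c \<alpha> \<Longrightarrow> pt \<alpha> x \<in> dom_c \<alpha>" by (simp add: pt_def ran_c_def inv_into_into)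
  show "\<And>x. x \<in> ran_c \<alpha> \<Longrightarrow> map_c \<alpha> (pt \<alpha> x) = x" by (simp add: pt_def ran_c_def f_inv_into_f)
  have ge: "g x = pt \<alpha> x" if x: "x \<in> ran_c \<alpha>" for x
  proof -
    obtain m where m: "m \<in> dom_c \<alpha>" "x = map_c \<alpha> m" using x unfolding ran_c_def by blast
    have "g x = m" using g m unfolding homeomorphism_def by blast
    then show ?thesis using pf m by simp
  qed
  have c: "continuous_on (ran_c \<alpha>) g" using g unfolding homeomorphism_def by blast
  show "continuous_on (ran_c \<alpha>) (pt \<alpha>)"
    using c by (rule continuous_on_eq) (simp add: ge)
qed

locale qm =
  fixes A :: "('a::{t2_space, second_countable_topology}, 'n::finite) chart set"
    and Q :: "(('a, 'n) chart \<times> (real^'n) set) set"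
  assumes atlas: "maximal_smooth_atlas A"
    and QE: "Q \<subseteq> EXT A"
    and cQ: "countable Q"
    and pw: "pairwise compatible_ext Q"
    and mb: "\<forall>e\<in>Q. manifold_with_boundary TYPE('n) (N_top e)"
begin

abbreviation "RR \<equiv> (ident A Q \<union> (ident A Q)\<inverse>)\<^sup>*"
abbreviation "TT \<equiv> topspace (N_Q A Q)"
definition cls where "cls u = RR `` {u}"

lemma A_chart: "\<alpha> \<in> A \<Longrightarrow> is_chart \<alpha>"
  using atlas unfolding maximal_smooth_atlas_def smooth_atlas_def by blast

lemma A_cover: "\<exists>\<alpha>\<in>A. m \<in> dom_c \<alpha>"
  using atlas unfolding maximal_smooth_atlas_def smooth_atlas_def by blast

lemma Q_facts:
  assumes "(\<alpha>, U) \<in> Q"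
  shows "\<alpha> \<in> A" "open U" "ran_c \<alpha> \<subseteq> U" "rel_bdry U (ran_c \<alpha>) \<subseteq> adm_bdry \<alpha>"
  using assms QE unfolding EXT_def by auto

lemma SQ_cases:
  assumes "e \<in> S_Q A Q"
  obtains \<alpha> where "\<alpha> \<in> A" "e = (\<alpha>, ran_c \<alpha>)" | "e \<in> Q"
  using assms unfolding S_Q_def by blast

lemma rel_bdry_self: "\<alpha> \<in> A \<Longrightarrow> rel_bdry (ran_c \<alpha>) (ran_c \<alpha>) = {}"
  using rel_bdry_eq[of "ran_c \<alpha>" "ran_c \<alpha>"] chart_facts(2)[OF A_chart] by auto

lemma SQ_facts:
  assumes "(\<alpha>, U) \<in> S_Q A Q"
  shows "\<alpha> \<in> A" "open U" "ran_c \<alpha> \<subseteq> U" "rel_bdry U (ran_c \<alpha>) \<subseteq> adm_bdry \<alpha>"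
proof -
  have "(\<alpha> \<in> A \<and> open U \<and> ran_c \<alpha> \<subseteq> U \<and> rel_bdry U (ran_c \<alpha>) \<subseteq> adm_bdry \<alpha>)"
  proof (rule SQ_cases[OF assms])
    fix \<beta> assume b: "\<beta> \<in> A" "(\<alpha>, U) = (\<beta>, ran_c \<beta>)"
    then show ?thesis using rel_bdry_self chart_facts(2)[OF A_chart] by auto
  next
    assume "(\<alpha>, U) \<in> Q" then show ?thesis using Q_facts by blast
  qed
  then show "\<alpha> \<in> A" "open U" "ran_c \<alpha> \<subseteq> U" "rel_bdry U (ran_c \<alpha>) \<subseteq> adm_bdry \<alpha>" by auto
qed

lemma SQ_bdry:
  assumes "(\<alpha>, U) \<in> S_Q A Q" "x \<in> rel_bdry U (ran_c \<alpha>)"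
  shows "U \<inter> closure (ran_c \<alpha>) - ran_c \<alpha> = rel_bdry U (ran_c \<alpha>)"
    "x \<in> U" "x \<in> closure (ran_c \<alpha>)" "x \<notin> ran_c \<alpha>" "x \<in> adm_bdry \<alpha>" "(\<alpha>, U) \<in> Q"
proof -
  have o: "open (ran_c \<alpha>)" using SQ_facts(1)[OF assms(1)] A_chart chart_facts(2) by blast
  show e: "U \<inter> closure (ran_c \<alpha>) - ran_c \<alpha> = rel_bdry U (ran_c \<alpha>)"
    using rel_bdry_eq[OF SQ_facts(2)[OF assms(1)] o SQ_facts(3)[OF assms(1)]] by simp
  show "x \<in> U" "x \<in> closure (ran_c \<alpha>)" "x \<notin> ran_c \<alpha>" using assms(2) e by auto
  show "x \<in> adm_bdry \<alpha>" using assms SQ_facts(4) by blast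
  show "(\<alpha>, U) \<in> Q"
  proof (rule SQ_cases[OF assms(1)])
    fix \<beta> assume b: "\<beta> \<in> A" "(\<alpha>, U) = (\<beta>, ran_c \<beta>)"
    then show ?thesis using rel_bdry_self assms(2) by auto
  qed
qed

lemma TT_eq: "TT = Sigma (S_Q A Q) N_ext"
  by (auto simp: N_Q_def N_top_def)

lemma TT_iff: "((\<alpha>,U),x) \<in> TT \<longleftrightarrow> (\<alpha>,U) \<in> S_Q A Q \<and> (x \<in> ran_c \<alpha> \<or> x \<in> rel_bdry U (ran_c \<alpha>))"
  by (auto simp: TT_eq N_ext_def)

lemma N_ext_closure:
  assumes "(\<alpha>, U) \<in> S_Q A Q" "x \<in> N_ext (\<alpha>, U)" shows "x \<in> closure (ran_c \<alpha>)"
  using assms SQ_bdry(3)[OF assms(1)] closure_subset by (auto simp: N_ext_def)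

definition rel2 :: "(('a, 'n) chart \<times> (real^'n) set) \<times> (real^'n) \<Rightarrow> (('a, 'n) chart \<times> (real^'n) set) \<times> (real^'n) \<Rightarrow> bool"
  where "rel2 u v \<longleftrightarrow>
    (snd u \<in> ran_c (fst (fst u)) \<and> snd v \<in> ran_c (fst (fst v)) \<and> pt (fst (fst u)) (snd u) = pt (fst (fst v)) (snd v)) \<or>
    (snd u \<in> rel_bdry (snd (fst u)) (ran_c (fst (fst u))) \<and> snd v \<in> rel_bdry (snd (fst v)) (ran_c (fst (fst v))) \<and>
       bequiv (fst (fst u)) (snd (fst u)) {snd u} (fst (fst v)) (snd (fst v)) {snd v})"

lemma rel2_simp: "rel2 ((\<alpha>,U),x) ((\<beta>,X),y) \<longleftrightarrow>
    (x \<in> ran_c \<alpha> \<and> y \<in> ran_c \<beta> \<and> pt \<alpha> x = pt \<beta> y) \<or>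
    (x \<in> rel_bdry U (ran_c \<alpha>) \<and> y \<in> rel_bdry X (ran_c \<beta>) \<and> bequiv \<alpha> U {x} \<beta> X {y})"
  by (simp add: rel2_def)

lemma ident_TT: "(u,v) \<in> ident A Q \<Longrightarrow> u \<in> TT \<and> v \<in> TT"
  unfolding ident_def by auto

lemma ident_rel2: "(u,v) \<in> ident A Q \<Longrightarrow> rel2 u v"
proof -
  assume uv: "(u,v) \<in> ident A Q"
  obtain \<alpha> U x \<beta> X y where u: "u = ((\<alpha>,U),x)" and v: "v = ((\<beta>,X),y)" by (metis prod.collapse)
  have T: "(\<alpha>,U) \<in> S_Q A Q" "(\<beta>,X) \<in> S_Q A Q" using ident_TT[OF uv] u v TT_iff by auto
  have cases: "(x \<in> ran_c \<alpha> \<and> y \<in> ran_c \<beta> \<and>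
          (\<exists>m \<in> dom_c \<alpha> \<inter> dom_c \<beta>. map_c \<alpha> m = x \<and> map_c \<beta> m = y)) \<or>
       (x \<in> rel_bdry U (ran_c \<alpha>) \<and> y \<in> rel_bdry X (ran_c \<beta>) \<and>
          bequiv \<alpha> U {x} \<beta> X {y})"
    using uv unfolding ident_def u v by auto
  then show "rel2 u v"
  proof
    assume a: "x \<in> ran_c \<alpha> \<and> y \<in> ran_c \<beta> \<and>
          (\<exists>m \<in> dom_c \<alpha> \<inter> dom_c \<beta>. map_c \<alpha> m = x \<and> map_c \<beta> m = y)"
    then obtain m where m: "m \<in> dom_c \<alpha>" "m \<in> dom_c \<beta>" "map_c \<alpha> m = x" "map_c \<beta> m = y" by blast
    have "pt \<alpha> x = m" "pt \<beta> y = m"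
      using m chart_facts(5)[OF A_chart[OF SQ_facts(1)[OF T(1)]]]
        chart_facts(5)[OF A_chart[OF SQ_facts(1)[OF T(2)]]] by auto
    then show ?thesis using a unfolding rel2_simp u v by simp
  next
    assume "x \<in> rel_bdry U (ran_c \<alpha>) \<and> y \<in> rel_bdry X (ran_c \<beta>) \<and> bequiv \<alpha> U {x} \<beta> X {y}"
    then show ?thesis unfolding rel2_simp u v by simp
  qed
qed

lemma rel2_sym: "rel2 u v \<Longrightarrow> rel2 v u"
  unfolding rel2_def by (auto dest: bequiv_sym)

lemma rel2_refl: "u \<in> TT \<Longrightarrow> rel2 u u"
proof -
  assume uT: "u \<in> TT"
  obtain \<alpha> U x where u: "u = ((\<alpha>,U),x)" by (metis prod.collapse)
  show ?thesis using uT unfolding u TT_iff rel2_simp by (auto simp: bequiv_refl)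
qed

lemma rel2_trans: "rel2 u v \<Longrightarrow> rel2 v w \<Longrightarrow> v \<in> TT \<Longrightarrow> rel2 u w"
proof -
  assume uv: "rel2 u v" and vw: "rel2 v w" and vT: "v \<in> TT"
  obtain \<alpha> U x where u: "u = ((\<alpha>,U),x)" by (metis prod.collapse)
  obtain \<beta> X y where v: "v = ((\<beta>,X),y)" by (metis prod.collapse)
  obtain \<gamma> Z z where w: "w = ((\<gamma>,Z),z)" by (metis prod.collapse)
  have dis: "y \<in> rel_bdry X (ran_c \<beta>) \<Longrightarrow> y \<notin> ran_c \<beta>"
    using SQ_bdry(4) vT unfolding v TT_iff by blast
  show ?thesis using uv vw dis unfolding rel2_simp u v w by (auto intro: bequiv_trans)
qed

lemma RR_rel2: "(u,v) \<in> RR \<Longrightarrow> u \<in> TT \<Longrightarrow> v \<in> TT \<and> rel2 u v"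
proof (induction rule: rtrancl_induct)
  case base then show ?case using rel2_refl by blast
next
  case (step w v)
  then have wT: "w \<in> TT" and uw: "rel2 u w" by auto
  from step(2) have vT: "v \<in> TT" and wv: "rel2 w v"
    using ident_TT ident_rel2 rel2_sym by blast+
  then show ?case using rel2_trans[OF uw wv wT] by blast
qed

lemma rel2_ident:
  assumes "u \<in> TT" "v \<in> TT" "rel2 u v" shows "(u,v) \<in> ident A Q"
proof -
  obtain \<alpha> U x where u: "u = ((\<alpha>,U),x)" by (metis prod.collapse)
  obtain \<beta> X y where v: "v = ((\<beta>,X),y)" by (metis prod.collapse)
  have T: "(\<alpha>,U) \<in> S_Q A Q" "(\<beta>,X) \<in> S_Q A Q" using assms u v TT_iff by auto
  note ca = chart_facts[OF A_chart[OF SQ_facts(1)[OF T(1)]]]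
  note cb = chart_facts[OF A_chart[OF SQ_facts(1)[OF T(2)]]]
  have "(x \<in> ran_c \<alpha> \<and> y \<in> ran_c \<beta> \<and>
          (\<exists>m \<in> dom_c \<alpha> \<inter> dom_c \<beta>. map_c \<alpha> m = x \<and> map_c \<beta> m = y)) \<or>
       (x \<in> rel_bdry U (ran_c \<alpha>) \<and> y \<in> rel_bdry X (ran_c \<beta>) \<and>
          bequiv \<alpha> U {x} \<beta> X {y})"
  proof (cases "x \<in> ran_c \<alpha> \<and> y \<in> ran_c \<beta> \<and> pt \<alpha> x = pt \<beta> y")
    case True
    have a1: "pt \<alpha> x \<in> dom_c \<alpha>" "map_c \<alpha> (pt \<alpha> x) = x" using ca(7,8) True by blast+
    have a2: "pt \<beta> y \<in> dom_c \<beta>" "map_c \<beta> (pt \<beta> y) = y" using cb(7,8) True by blast+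
    have "pt \<alpha> x \<in> dom_c \<alpha> \<inter> dom_c \<beta>" "map_c \<alpha> (pt \<alpha> x) = x" "map_c \<beta> (pt \<alpha> x) = y"
      using a1 a2 True by (metis IntI)+
    then show ?thesis using True by blast
  next
    case False then show ?thesis using assms(3) unfolding rel2_simp u v by auto
  qed
  then show ?thesis using assms unfolding ident_def u v by auto
qed

lemma RR_iff: "u \<in> TT \<Longrightarrow> v \<in> TT \<Longrightarrow> (u,v) \<in> RR \<longleftrightarrow> rel2 u v"
  using RR_rel2 rel2_ident by blast

lemma cls_eq_iff: "u \<in> TT \<Longrightarrow> v \<in> TT \<Longrightarrow> cls u = cls v \<longleftrightarrow> rel2 u v"
proof
  assume uT: "u \<in> TT" and vT: "v \<in> TT" and e: "cls u = cls v"
  have "v \<in> cls v" unfolding cls_def by blast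
  then have "(u,v) \<in> RR" using e unfolding cls_def by blast
  then show "rel2 u v" using RR_iff uT vT by blast
next
  assume uT: "u \<in> TT" and vT: "v \<in> TT" and r: "rel2 u v"
  then have "(u,v) \<in> RR" using RR_iff by blast
  then show "cls u = cls v" unfolding cls_def by (rule R_class_eq)
qed

lemma RR_image_TT: "S \<subseteq> TT \<Longrightarrow> RR `` S \<subseteq> TT"
  using RR_rel2 by blast

lemma topspace_QM: "topspace (Q_M A Q) = cls ` TT"
  unfolding Q_M_def topspace_qt by (auto simp: quotient_def cls_def)

lemma cont_cls: "continuous_map (N_Q A Q) (Q_M A Q) cls"
  unfolding Q_M_def cls_def[abs_def] by (rule continuous_map_cls)

end

lemma seq_inv_tendsto:
  fixes z :: "nat \<Rightarrow> 'b::metric_space"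
  assumes "\<And>k. dist (z k) y < inverse (real (Suc k))" shows "z \<longlonglongrightarrow> y"
  unfolding lim_sequentially
proof (intro allI impI)
  fix r :: real assume "r > 0"
  then obtain N where N: "inverse (real (Suc N)) < r" using reals_Archimedean by blast
  have "dist (z n) y < r" if "n \<ge> N" for n
  proof -
    have "inverse (real (Suc n)) \<le> inverse (real (Suc N))" using that by (simp add: field_simps)
    then show ?thesis using assms[of n] N by linarith
  qed
  then show "\<exists>no. \<forall>n\<ge>no. dist (z n) y < r" by blast
qed

lemma chart_seq_to_closure:
  assumes "is_chart \<alpha>" "x \<in> closure (ran_c \<alpha>)"
  obtains s where "\<forall>i. s i \<in> dom_c \<alpha>" "(\<lambda>i. map_c \<alpha> (s i)) \<longlonglongrightarrow> x"
proof -
  obtain z where z: "\<forall>n. z n \<in> ran_c \<alpha>" "z \<longlonglongrightarrow> x" using assms(2) closure_sequential by blast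
  have "\<forall>i. pt \<alpha> (z i) \<in> dom_c \<alpha>" "(\<lambda>i. map_c \<alpha> (pt \<alpha> (z i))) = z"
    using z(1) chart_facts(7,8)[OF assms(1)] by auto
  then show ?thesis using that z(2) by metis
qed

context qm begin

definition phi where "phi e x = cls (e,x)"

lemma phi_cont: "e \<in> S_Q A Q \<Longrightarrow> continuous_map (N_top e) (Q_M A Q) (phi e)"
proof -
  assume e: "e \<in> S_Q A Q"
  have "continuous_map (N_top e) (N_Q A Q) (\<lambda>x. (e,x))"
    unfolding N_Q_def using e by (rule continuous_map_component_injection)
  then have "continuous_map (N_top e) (Q_M A Q) (cls \<circ> (\<lambda>x. (e,x)))"
    using cont_cls continuous_map_compose by blast
  then show ?thesis by (simp add: phi_def[abs_def] comp_def)
qed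

lemma in_TT: "e \<in> S_Q A Q \<Longrightarrow> x \<in> N_ext e \<Longrightarrow> (e,x) \<in> TT"
  by (simp add: TT_eq)

lemma phi_inj:
  assumes eS: "(\<alpha>,U) \<in> S_Q A Q" and x: "x \<in> N_ext (\<alpha>,U)" and x': "x' \<in> N_ext (\<alpha>,U)"
    and eq: "phi (\<alpha>,U) x = phi (\<alpha>,U) x'"
  shows "x = x'"
proof -
  note ca = chart_facts[OF A_chart[OF SQ_facts(1)[OF eS]]]
  have r: "rel2 ((\<alpha>,U),x) ((\<alpha>,U),x')"
    using eq cls_eq_iff in_TT[OF eS x] in_TT[OF eS x'] unfolding phi_def by blast
  show ?thesis
  proof (cases "x \<in> ran_c \<alpha> \<and> x' \<in> ran_c \<alpha> \<and> pt \<alpha> x = pt \<alpha> x'")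
    case True
    then show ?thesis using ca(8) by metis
  next
    case False
    then have b: "x \<in> rel_bdry U (ran_c \<alpha>)" "bequiv \<alpha> U {x} \<alpha> U {x'}" using r rel2_simp by blast+
    have xc: "x \<in> closure (ran_c \<alpha>)" using SQ_bdry(3)[OF eS b(1)] .
    obtain s where s: "\<forall>i. s i \<in> dom_c \<alpha>" "(\<lambda>i. map_c \<alpha> (s i)) \<longlonglongrightarrow> x"
      using chart_seq_to_closure[OF A_chart[OF SQ_facts(1)[OF eS]] xc] by blast
    have "covers \<alpha> U {x'} \<alpha> U {x}" using b(2) bequiv_def by blast
    moreover have "(\<forall>i. s i \<in> dom_c \<alpha>) \<and> (\<exists>z\<in>{x}. seq_acc (\<lambda>i. map_c \<alpha> (s i)) z)"
      using s lim_imp_seq_acc by blast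
    ultimately obtain r where r: "strict_mono r" "\<exists>z\<in>{x'}. seq_acc (\<lambda>i. map_c \<alpha> (s (r i))) z"
      unfolding covers_def by blast
    then have "seq_acc ((\<lambda>i. map_c \<alpha> (s i)) \<circ> r) x'" by (simp add: comp_def)
    then show ?thesis using seq_acc_subseq_lim[OF _ s(2) r(1)] by simp
  qed
qed

lemma N_top_open_iff:
  "openin (N_top e) G \<longleftrightarrow> G \<subseteq> N_ext e \<and> (\<forall>x\<in>G. \<exists>\<epsilon>>0. \<forall>x'\<in>N_ext e. dist x' x < \<epsilon> \<longrightarrow> x' \<in> G)"
  unfolding N_top_def by (rule openin_euclidean_subtopology_iff)

lemma topspace_N_top [simp]: "topspace (N_top e) = N_ext e"
  by (simp add: N_top_def)

end

context qm begin

lemma sat_interior: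
  assumes eS: "(\<alpha>,U) \<in> S_Q A Q" and fS: "(\<beta>,X) \<in> S_Q A Q"
    and eps: "\<epsilon> > 0" and Oe: "\<forall>x'\<in>N_ext (\<alpha>,U). dist x' x < \<epsilon> \<longrightarrow> x' \<in> G"
    and xr: "x \<in> ran_c \<alpha>" and yr: "y \<in> ran_c \<beta>" and pe: "pt \<alpha> x = pt \<beta> y"
  shows "\<exists>\<delta>>0. \<forall>y'\<in>N_ext (\<beta>,X). dist y' y < \<delta> \<longrightarrow> (\<exists>x'\<in>G. rel2 ((\<alpha>,U),x') ((\<beta>,X),y'))"
proof -
  note ca = chart_facts[OF A_chart[OF SQ_facts(1)[OF eS]]]
  note cb = chart_facts[OF A_chart[OF SQ_facts(1)[OF fS]]]
  define H where "H = ran_c \<beta> \<inter> pt \<beta> -` (dom_c \<alpha> \<inter> map_c \<alpha> -` ball x \<epsilon>)"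
  have "open (dom_c \<alpha> \<inter> map_c \<alpha> -` ball x \<epsilon>)"
    using continuous_open_preimage[OF ca(3) ca(1)] by simp
  then have oH: "open H" unfolding H_def by (rule continuous_open_preimage[OF cb(4) cb(2)])
  have "pt \<beta> y \<in> dom_c \<alpha>" "map_c \<alpha> (pt \<beta> y) = x" using pe ca(7,8) xr by metis+
  then have yH: "y \<in> H" unfolding H_def using yr eps by simp
  obtain \<delta> where d: "\<delta> > 0" "ball y \<delta> \<subseteq> H" using oH yH open_contains_ball_eq by blast
  have "\<exists>x'\<in>G. rel2 ((\<alpha>,U),x') ((\<beta>,X),y')" if y': "dist y' y < \<delta>" for y'
  proof -
    have yH': "y' \<in> H" using d y' by (auto simp: dist_commute)
    then have h: "y' \<in> ran_c \<beta>" "pt \<beta> y' \<in> dom_c \<alpha>" "dist x (map_c \<alpha> (pt \<beta> y')) < \<epsilon>"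
      unfolding H_def by auto
    define x' where "x' = map_c \<alpha> (pt \<beta> y')"
    have x'r: "x' \<in> ran_c \<alpha>" using ca(6) h(2) x'_def by simp
    then have "x' \<in> N_ext (\<alpha>,U)" by (simp add: N_ext_def)
    moreover have "dist x' x < \<epsilon>" using h(3) x'_def by (simp add: dist_commute)
    ultimately have "x' \<in> G" using Oe by blast
    moreover have "pt \<alpha> x' = pt \<beta> y'" using ca(5) h(2) x'_def by simp
    ultimately show ?thesis using x'r h(1) rel2_simp by blast
  qed
  then show ?thesis using d(1) by blast
qed

lemma step1_bdry:
  assumes eS: "(\<alpha>,U) \<in> S_Q A Q" and fS: "(\<beta>,X) \<in> S_Q A Q"
    and eps: "\<epsilon> > 0" and cov: "covers \<alpha> U {x} \<beta> X {y}"
  shows "\<exists>\<delta>>0. \<forall>z\<in>ran_c \<beta>. dist z y < \<delta> \<longrightarrow> pt \<beta> z \<in> dom_c \<alpha> \<and> dist (map_c \<alpha> (pt \<beta> z)) x < \<epsilon>"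
proof (rule ccontr)
  note cb = chart_facts[OF A_chart[OF SQ_facts(1)[OF fS]]]
  assume "\<not> ?thesis"
  then have "\<forall>k. \<exists>z. z \<in> ran_c \<beta> \<and> dist z y < inverse (real (Suc k)) \<and>
       \<not> (pt \<beta> z \<in> dom_c \<alpha> \<and> dist (map_c \<alpha> (pt \<beta> z)) x < \<epsilon>)"
    by (metis inverse_positive_iff_positive of_nat_0_less_iff zero_less_Suc)
  then obtain z where z: "\<And>k. z k \<in> ran_c \<beta>" "\<And>k. dist (z k) y < inverse (real (Suc k))"
     "\<And>k. \<not> (pt \<beta> (z k) \<in> dom_c \<alpha> \<and> dist (map_c \<alpha> (pt \<beta> (z k))) x < \<epsilon>)"
    by metis
  have zl: "z \<longlonglongrightarrow> y" using seq_inv_tendsto z(2) by blast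
  define s where "s k = pt \<beta> (z k)" for k
  have s: "\<forall>i. s i \<in> dom_c \<beta>" "(\<lambda>i. map_c \<beta> (s i)) = z" using z(1) cb(7,8) s_def by auto
  have "(\<forall>i. s i \<in> dom_c \<beta>) \<and> (\<exists>w\<in>{y}. seq_acc (\<lambda>i. map_c \<beta> (s i)) w)"
    using s zl lim_imp_seq_acc by simp
  then obtain r where r: "strict_mono r" "\<forall>i. s (r i) \<in> dom_c \<alpha>"
      "\<exists>w\<in>{x}. seq_acc (\<lambda>i. map_c \<alpha> (s (r i))) w"
    using cov unfolding covers_def by blast
  then have acc: "seq_acc (\<lambda>i. map_c \<alpha> (s (r i))) x" by simp
  have "{i. map_c \<alpha> (s (r i)) \<in> ball x \<epsilon>} = {}"
    using z(3) r(2) unfolding s_def by (auto simp: dist_commute)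
  then show False using acc eps unfolding seq_acc_def by (metis finite.emptyI open_ball centre_in_ball)
qed

end

context qm begin

lemma sat_boundary:
  assumes eS: "(\<alpha>,U) \<in> S_Q A Q" and fS: "(\<beta>,X) \<in> S_Q A Q"
    and eps: "\<epsilon> > 0" and Oe: "\<forall>x'\<in>N_ext (\<alpha>,U). dist x' x < \<epsilon> \<longrightarrow> x' \<in> G"
    and xb: "x \<in> rel_bdry U (ran_c \<alpha>)" and yb: "y \<in> rel_bdry X (ran_c \<beta>)"
    and beq: "bequiv \<alpha> U {x} \<beta> X {y}"
  shows "\<exists>\<delta>>0. \<forall>y'\<in>N_ext (\<beta>,X). dist y' y < \<delta> \<longrightarrow> (\<exists>x'\<in>G. rel2 ((\<alpha>,U),x') ((\<beta>,X),y'))"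
proof -
  note ca = chart_facts[OF A_chart[OF SQ_facts(1)[OF eS]]]
  note cb = chart_facts[OF A_chart[OF SQ_facts(1)[OF fS]]]
  have xU: "x \<in> U" using SQ_bdry(2)[OF eS xb] .
  obtain \<epsilon>1 where e1: "\<epsilon>1 > 0" "ball x \<epsilon>1 \<subseteq> U"
    using SQ_facts(2)[OF eS] xU open_contains_ball_eq by blast
  define \<epsilon>' where "\<epsilon>' = min \<epsilon> \<epsilon>1 / 2"
  have e': "\<epsilon>' > 0" "\<epsilon>' < \<epsilon>" "cball x \<epsilon>' \<subseteq> U"
    using eps e1 unfolding \<epsilon>'_def by auto
  have cov: "covers \<alpha> U {x} \<beta> X {y}" using beq bequiv_def by blast
  obtain \<delta> where d: "\<delta> > 0"
    "\<And>z. z \<in> ran_c \<beta> \<Longrightarrow> dist z y < \<delta> \<Longrightarrow> pt \<beta> z \<in> dom_c \<alpha> \<and> dist (map_c \<alpha> (pt \<beta> z)) x < \<epsilon>'"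
    using step1_bdry[OF eS fS e'(1) cov] by blast
  have "\<exists>x'\<in>G. rel2 ((\<alpha>,U),x') ((\<beta>,X),y')"
    if y'N: "y' \<in> N_ext (\<beta>,X)" and y'd: "dist y' y < \<delta>" for y'
  proof (cases "y' \<in> ran_c \<beta>")
    case True
    define x' where "x' = map_c \<alpha> (pt \<beta> y')"
    have h: "pt \<beta> y' \<in> dom_c \<alpha>" "dist x' x < \<epsilon>'" using d(2)[OF True y'd] x'_def by auto
    have x'r: "x' \<in> ran_c \<alpha>" using ca(6) h(1) x'_def by simp
    then have "x' \<in> N_ext (\<alpha>,U)" by (simp add: N_ext_def)
    then have "x' \<in> G" using Oe h(2) e'(2) by auto
    moreover have "pt \<alpha> x' = pt \<beta> y'" using ca(5) h(1) x'_def by simp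
    ultimately show ?thesis using x'r True rel2_simp by blast
  next
    case False
    then have y'b: "y' \<in> rel_bdry X (ran_c \<beta>)" using y'N by (simp add: N_ext_def)
    have y'c: "y' \<in> closure (ran_c \<beta>)" using SQ_bdry(3)[OF fS y'b] .
    obtain z0 where z0: "\<forall>n. z0 n \<in> ran_c \<beta>" "z0 \<longlonglongrightarrow> y'" using y'c closure_sequential by blast
    have "eventually (\<lambda>n. z0 n \<in> ball y \<delta>) sequentially"
      using z0(2) y'd by (intro topological_tendstoD) (auto simp: dist_commute)
    then obtain N where N: "\<And>n. n \<ge> N \<Longrightarrow> dist y (z0 n) < \<delta>" by (auto simp: eventually_sequentially)
    define z where "z n = z0 (n + N)" for n
    have z: "\<And>n. z n \<in> ran_c \<beta>" "\<And>n. dist (z n) y < \<delta>" "z \<longlonglongrightarrow> y'"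
      using z0 N LIMSEQ_ignore_initial_segment[OF z0(2)] unfolding z_def by (auto simp: dist_commute)
    define m where "m n = pt \<beta> (z n)" for n
    define w where "w n = map_c \<alpha> (m n)" for n
    have m: "\<And>n. m n \<in> dom_c \<beta>" "\<And>n. map_c \<beta> (m n) = z n" "\<And>n. m n \<in> dom_c \<alpha>"
      "\<And>n. dist (w n) x < \<epsilon>'"
      using z(1) cb(7,8) d(2)[OF z(1) z(2)] unfolding m_def w_def by auto
    have wc: "\<forall>n. w n \<in> cball x \<epsilon>'" using m(4) by (simp add: dist_commute less_imp_le)
    obtain t r where tr: "t \<in> cball x \<epsilon>'" "strict_mono r" "(w \<circ> r) \<longlonglongrightarrow> t"
      using seq_compactE[OF compact_imp_seq_compact[OF compact_cball] wc] by blast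
    have wr: "\<And>n. w n \<in> ran_c \<alpha>" using ca(6) m(3) w_def by simp
    have zr: "(z \<circ> r) \<longlonglongrightarrow> y'" using LIMSEQ_subseq_LIMSEQ[OF z(3) tr(2)] .
    have tn: "t \<notin> ran_c \<alpha>"
    proof
      assume tin: "t \<in> ran_c \<alpha>"
      have "((\<lambda>k. pt \<alpha> ((w \<circ> r) k)) \<longlongrightarrow> pt \<alpha> t) sequentially"
        using continuous_on_tendsto_compose[OF ca(4) tr(3) tin] wr by simp
      moreover have "\<And>k. pt \<alpha> ((w \<circ> r) k) = (m \<circ> r) k" using ca(5) m(3) w_def by simp
      ultimately have ml: "(m \<circ> r) \<longlonglongrightarrow> pt \<alpha> t" by (simp add: comp_def)
      have yadm: "y' \<in> adm_bdry \<beta>" using SQ_bdry(5)[OF fS y'b] .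
      have "(\<forall>i. (m \<circ> r) i \<in> dom_c \<beta>) \<and> ((\<lambda>i. map_c \<beta> ((m \<circ> r) i)) \<longlonglongrightarrow> y')"
        using m(1,2) zr by (simp add: comp_def)
      then have "\<nexists>q. seq_acc (m \<circ> r) q" using yadm unfolding adm_bdry_def by blast
      then show False using lim_imp_seq_acc[OF ml] by blast
    qed
    have tcl: "t \<in> closure (ran_c \<alpha>)"
      using tr(3) wr by (intro closure_sequential[THEN iffD2]) (auto intro!: exI[of _ "w \<circ> r"])
    have tU: "t \<in> U" using tr(1) e'(3) by blast
    have tb: "t \<in> rel_bdry U (ran_c \<alpha>)" using SQ_bdry(1)[OF eS xb] tn tcl tU by blast
    have tN: "t \<in> N_ext (\<alpha>,U)" using tb by (simp add: N_ext_def)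
    have "dist t x < \<epsilon>" using tr(1) e'(2) by (simp add: dist_commute)
    then have tG: "t \<in> G" using Oe tN by blast
    show ?thesis
    proof (cases "(\<alpha>,U) = (\<beta>,X)")
      case True
      then have ab: "\<alpha> = \<beta>" "U = X" by auto
      have "\<And>n. w n = z n" using m(2) ab unfolding w_def by simp
      then have "(z \<circ> r) \<longlonglongrightarrow> t" using tr(3) by (simp add: comp_def)
      then have "t = y'" using zr LIMSEQ_unique by blast
      then show ?thesis using tG rel2_refl[OF in_TT[OF fS y'N]] ab by blast
    next
      case False
      have eQ: "(\<alpha>,U) \<in> Q" using SQ_bdry(6)[OF eS xb] .
      have fQ: "(\<beta>,X) \<in> Q" using SQ_bdry(6)[OF fS yb] .
      have comp: "compatible_ext (\<alpha>,U) (\<beta>,X)" using pw eQ fQ False unfolding pairwise_def by blast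
      have "in_contact \<alpha> t \<beta> y'"
        unfolding in_contact_def
        apply (rule exI[of _ "m \<circ> r"])
        using m(1,2,3) zr tr(3) by (simp add: comp_def w_def)
      moreover have "t \<in> adm_bdry \<alpha> \<inter> U" using SQ_bdry(5)[OF eS tb] tU by blast
      moreover have "y' \<in> adm_bdry \<beta> \<inter> X" using SQ_bdry(2,5)[OF fS y'b] by blast
      ultimately have "bequiv \<alpha> U {t} \<beta> X {y'}" using comp unfolding compatible_ext_def by auto
      then show ?thesis using tG tb y'b rel2_simp by blast
    qed
  qed
  then show ?thesis using d(1) by blast
qed

end

context qm begin

lemma sat_fiber_open:
  assumes eS: "(\<alpha>,U) \<in> S_Q A Q" and G: "openin (N_top (\<alpha>,U)) G" and fS: "(\<beta>,X) \<in> S_Q A Q"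
  shows "openin (N_top (\<beta>,X)) {y \<in> N_ext (\<beta>,X). \<exists>x\<in>G. rel2 ((\<alpha>,U),x) ((\<beta>,X),y)}"
  unfolding N_top_open_iff
proof (intro conjI ballI)
  fix y assume "y \<in> {y \<in> N_ext (\<beta>,X). \<exists>x\<in>G. rel2 ((\<alpha>,U),x) ((\<beta>,X),y)}"
  then obtain x where x: "x \<in> G" "rel2 ((\<alpha>,U),x) ((\<beta>,X),y)" by blast
  obtain \<epsilon> where eps: "\<epsilon> > 0" "\<forall>x'\<in>N_ext (\<alpha>,U). dist x' x < \<epsilon> \<longrightarrow> x' \<in> G"
    using G x(1) unfolding N_top_open_iff by blast
  have "\<exists>\<delta>>0. \<forall>y'\<in>N_ext (\<beta>,X). dist y' y < \<delta> \<longrightarrow> (\<exists>x'\<in>G. rel2 ((\<alpha>,U),x') ((\<beta>,X),y'))"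
    using x(2)[unfolded rel2_simp]
  proof
    assume "x \<in> ran_c \<alpha> \<and> y \<in> ran_c \<beta> \<and> pt \<alpha> x = pt \<beta> y"
    then show ?thesis using sat_interior[OF eS fS eps(1,2)] by blast
  next
    assume "x \<in> rel_bdry U (ran_c \<alpha>) \<and> y \<in> rel_bdry X (ran_c \<beta>) \<and> bequiv \<alpha> U {x} \<beta> X {y}"
    then show ?thesis using sat_boundary[OF eS fS eps(1,2)] by blast
  qed
  then show "\<exists>\<delta>>0. \<forall>y'\<in>N_ext (\<beta>,X). dist y' y < \<delta> \<longrightarrow>
      y' \<in> {y \<in> N_ext (\<beta>,X). \<exists>x\<in>G. rel2 ((\<alpha>,U),x) ((\<beta>,X),y)}" by blast
qed auto

lemma phi_open:
  assumes eS: "e \<in> S_Q A Q" and G: "openin (N_top e) G"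
  shows "openin (Q_M A Q) (phi e ` G)"
proof -
  obtain \<alpha> U where e: "e = (\<alpha>,U)" by (metis prod.collapse)
  have GN: "G \<subseteq> N_ext e" using openin_subset[OF G] by simp
  define S where "S = (\<lambda>x. (e,x)) ` G"
  have ST: "S \<subseteq> TT" using GN eS unfolding S_def by (auto simp: TT_eq)
  have img: "phi e ` G = (\<lambda>u. RR `` {u}) ` S" unfolding S_def phi_def cls_def by (simp add: image_image)
  have fib: "{y. (f,y) \<in> TT \<inter> RR `` S} = {y \<in> N_ext (\<beta>,X). \<exists>x\<in>G. rel2 ((\<alpha>,U),x) ((\<beta>,X),y)}"
    if f: "f = (\<beta>,X)" "f \<in> S_Q A Q" for f \<beta> X
  proof -
    have "(f,y) \<in> TT \<inter> RR `` S \<longleftrightarrow> y \<in> N_ext (\<beta>,X) \<and> (\<exists>x\<in>G. rel2 ((\<alpha>,U),x) ((\<beta>,X),y))" for y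
    proof -
      have "(f,y) \<in> RR `` S \<longleftrightarrow> (\<exists>x\<in>G. ((e,x),(f,y)) \<in> RR)" unfolding S_def by blast
      moreover have "(f,y) \<in> TT \<longleftrightarrow> y \<in> N_ext (\<beta>,X)" using f by (simp add: TT_eq)
      moreover have "x \<in> G \<Longrightarrow> (f,y) \<in> TT \<Longrightarrow> ((e,x),(f,y)) \<in> RR \<longleftrightarrow> rel2 ((\<alpha>,U),x) ((\<beta>,X),y)" for x
        using RR_iff[of "(e,x)" "(f,y)"] GN eS e f by (auto simp: TT_eq)
      ultimately show ?thesis by blast
    qed
    then show ?thesis by blast
  qed
  have "openin (N_Q A Q) (TT \<inter> RR `` S)"
    unfolding openin_sum_topology[of N_top "S_Q A Q", folded N_Q_def]
  proof (intro conjI ballI)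
    show "TT \<inter> RR `` S \<subseteq> Sigma (S_Q A Q) (topspace \<circ> N_top)" by (auto simp: TT_eq)
    fix f assume f: "f \<in> S_Q A Q"
    obtain \<beta> X where fe: "f = (\<beta>,X)" by (metis prod.collapse)
    have eS': "(\<alpha>,U) \<in> S_Q A Q" and G': "openin (N_top (\<alpha>,U)) G" and f': "(\<beta>,X) \<in> S_Q A Q"
      using eS G f e fe by simp_all
    show "openin (N_top f) {x. (f, x) \<in> TT \<inter> RR `` S}"
      unfolding fib[OF fe f] unfolding fe by (rule sat_fiber_open[OF eS' G' f'])
  qed
  then show ?thesis unfolding img Q_M_def using openin_qt_image ST by blast
qed

end

context qm begin

lemma sep:
  assumes u: "((\<alpha>,U),p) \<in> TT" and v: "((\<beta>,X),q) \<in> TT" and nr: "\<not> rel2 ((\<alpha>,U),p) ((\<beta>,X),q)"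
  shows "\<exists>\<epsilon>>0. \<forall>m\<in>dom_c \<alpha> \<inter> dom_c \<beta>. \<not> (dist (map_c \<alpha> m) p < \<epsilon> \<and> dist (map_c \<beta> m) q < \<epsilon>)"
proof (rule ccontr)
  assume "\<not> ?thesis"
  then have "\<forall>k. \<exists>m. m \<in> dom_c \<alpha> \<inter> dom_c \<beta> \<and> dist (map_c \<alpha> m) p < inverse (real (Suc k))
     \<and> dist (map_c \<beta> m) q < inverse (real (Suc k))"
    by (metis inverse_positive_iff_positive of_nat_0_less_iff zero_less_Suc)
  then obtain m where m: "\<And>k. m k \<in> dom_c \<alpha>" "\<And>k. m k \<in> dom_c \<beta>"
    "\<And>k. dist (map_c \<alpha> (m k)) p < inverse (real (Suc k))"
    "\<And>k. dist (map_c \<beta> (m k)) q < inverse (real (Suc k))" by (metis IntE)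
  have la: "(\<lambda>k. map_c \<alpha> (m k)) \<longlonglongrightarrow> p" by (rule seq_inv_tendsto) (rule m(3))
  have lb: "(\<lambda>k. map_c \<beta> (m k)) \<longlonglongrightarrow> q" by (rule seq_inv_tendsto) (rule m(4))
  have eS: "(\<alpha>,U) \<in> S_Q A Q" and fS: "(\<beta>,X) \<in> S_Q A Q" using u v TT_iff by auto
  note ca = chart_facts[OF A_chart[OF SQ_facts(1)[OF eS]]]
  note cb = chart_facts[OF A_chart[OF SQ_facts(1)[OF fS]]]
  have ma: "m \<longlonglongrightarrow> pt \<alpha> p" if pr: "p \<in> ran_c \<alpha>"
  proof -
    have "((\<lambda>k. pt \<alpha> (map_c \<alpha> (m k))) \<longlongrightarrow> pt \<alpha> p) sequentially"
      using continuous_on_tendsto_compose[OF ca(4) la pr] ca(6) m(1) by simp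
    then show ?thesis using ca(5) m(1) by simp
  qed
  have mb': "m \<longlonglongrightarrow> pt \<beta> q" if qr: "q \<in> ran_c \<beta>"
  proof -
    have "((\<lambda>k. pt \<beta> (map_c \<beta> (m k))) \<longlongrightarrow> pt \<beta> q) sequentially"
      using continuous_on_tendsto_compose[OF cb(4) lb qr] cb(6) m(2) by simp
    then show ?thesis using cb(5) m(2) by simp
  qed
  have pb: "p \<in> rel_bdry U (ran_c \<alpha>)" if "p \<notin> ran_c \<alpha>" using u that TT_iff by blast
  have qb: "q \<in> rel_bdry X (ran_c \<beta>)" if "q \<notin> ran_c \<beta>" using v that TT_iff by blast
  show False
  proof (cases "p \<in> ran_c \<alpha>")
    case pr: True
    show False
    proof (cases "q \<in> ran_c \<beta>")
      case True
      then have "pt \<alpha> p = pt \<beta> q" using ma[OF pr] mb'[OF True] LIMSEQ_unique by blast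
      then show False using nr pr True rel2_simp by blast
    next
      case False
      have "q \<in> adm_bdry \<beta>" using SQ_bdry(5)[OF fS qb[OF False]] .
      then have "\<nexists>z. seq_acc m z" using m(2) lb unfolding adm_bdry_def by blast
      then show False using lim_imp_seq_acc[OF ma[OF pr]] by blast
    qed
  next
    case pn: False
    show False
    proof (cases "q \<in> ran_c \<beta>")
      case True
      have "p \<in> adm_bdry \<alpha>" using SQ_bdry(5)[OF eS pb[OF pn]] .
      then have "\<nexists>z. seq_acc m z" using m(1) la unfolding adm_bdry_def by blast
      then show False using lim_imp_seq_acc[OF mb'[OF True]] by blast
    next
      case qn: False
      show False
      proof (cases "(\<alpha>,U) = (\<beta>,X)")
        case True
        then have "p = q" using la lb LIMSEQ_unique by auto
        then show False using nr rel2_refl[OF v] True by simp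
      next
        case False
        have eQ: "(\<alpha>,U) \<in> Q" using SQ_bdry(6)[OF eS pb[OF pn]] .
        have fQ: "(\<beta>,X) \<in> Q" using SQ_bdry(6)[OF fS qb[OF qn]] .
        have comp: "compatible_ext (\<alpha>,U) (\<beta>,X)" using pw eQ fQ False unfolding pairwise_def by blast
        have "in_contact \<alpha> p \<beta> q" unfolding in_contact_def using m(1,2) la lb by blast
        moreover have "p \<in> adm_bdry \<alpha> \<inter> U" using SQ_bdry(2,5)[OF eS pb[OF pn]] by blast
        moreover have "q \<in> adm_bdry \<beta> \<inter> X" using SQ_bdry(2,5)[OF fS qb[OF qn]] by blast
        ultimately have "bequiv \<alpha> U {p} \<beta> X {q}" using comp unfolding compatible_ext_def by auto
        then show False using nr pb[OF pn] qb[OF qn] rel2_simp by blast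
      qed
    qed
  qed
qed

lemma disj_interior:
  assumes eS: "(\<alpha>,U) \<in> S_Q A Q" and fS: "(\<beta>,X) \<in> S_Q A Q"
    and sepa: "\<forall>m\<in>dom_c \<alpha> \<inter> dom_c \<beta>. \<not> (dist (map_c \<alpha> m) p < \<epsilon> \<and> dist (map_c \<beta> m) q < \<epsilon>)"
    and z: "z \<in> ran_c \<alpha>" "dist z p < \<epsilon>" and w: "w \<in> N_ext (\<beta>,X)" "dist w q < \<epsilon>"
    and eq: "phi (\<alpha>,U) z = phi (\<beta>,X) w"
  shows False
proof -
  note ca = chart_facts[OF A_chart[OF SQ_facts(1)[OF eS]]]
  note cb = chart_facts[OF A_chart[OF SQ_facts(1)[OF fS]]]
  have zN: "z \<in> N_ext (\<alpha>,U)" using z by (simp add: N_ext_def)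
  have r: "rel2 ((\<alpha>,U),z) ((\<beta>,X),w)"
    using eq cls_eq_iff in_TT[OF eS zN] in_TT[OF fS w(1)] unfolding phi_def by blast
  have "z \<notin> rel_bdry U (ran_c \<alpha>)" using z(1) SQ_bdry(4)[OF eS] by blast
  then have i: "w \<in> ran_c \<beta>" "pt \<alpha> z = pt \<beta> w" using r rel2_simp by blast+
  define m where "m = pt \<alpha> z"
  have "m \<in> dom_c \<alpha>" "map_c \<alpha> m = z" using ca(7,8) z(1) m_def by auto
  moreover have "m \<in> dom_c \<beta>" "map_c \<beta> m = w" using cb(7,8) i m_def by auto
  ultimately show False using sepa z(2) w(2) by blast
qed

lemma disj_img:
  assumes eS: "(\<alpha>,U) \<in> S_Q A Q" and fS: "(\<beta>,X) \<in> S_Q A Q"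
    and sepa: "\<forall>m\<in>dom_c \<alpha> \<inter> dom_c \<beta>. \<not> (dist (map_c \<alpha> m) p < \<epsilon> \<and> dist (map_c \<beta> m) q < \<epsilon>)"
  shows "phi (\<alpha>,U) ` (N_ext (\<alpha>,U) \<inter> ball p \<epsilon>) \<inter> phi (\<beta>,X) ` (N_ext (\<beta>,X) \<inter> ball q \<epsilon>) = {}"
proof (rule ccontr)
  assume "\<not> ?thesis"
  then obtain z w where z: "z \<in> N_ext (\<alpha>,U)" "z \<in> ball p \<epsilon>" and w: "w \<in> N_ext (\<beta>,X)" "w \<in> ball q \<epsilon>"
    and eq: "phi (\<alpha>,U) z = phi (\<beta>,X) w" by blast
  define B1 where "B1 = N_ext (\<alpha>,U) \<inter> ball p \<epsilon>"
  define B2 where "B2 = N_ext (\<beta>,X) \<inter> ball q \<epsilon>"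
  have oB1: "openin (N_top (\<alpha>,U)) B1" unfolding B1_def N_top_def by (rule openin_open_Int) simp
  have oB2: "openin (N_top (\<beta>,X)) B2" unfolding B2_def N_top_def by (rule openin_open_Int) simp
  have o2: "openin (Q_M A Q) (phi (\<beta>,X) ` B2)" using phi_open[OF fS oB2] .
  define Oz where "Oz = {x \<in> B1. phi (\<alpha>,U) x \<in> phi (\<beta>,X) ` B2}"
  have oOz: "openin (N_top (\<alpha>,U)) Oz"
    unfolding Oz_def by (rule openin_continuous_map_preimage_gen[OF phi_cont[OF eS] oB1 o2])
  have zO: "z \<in> Oz" unfolding Oz_def B1_def B2_def using z w eq by blast
  obtain \<eta> where eta: "\<eta> > 0" "\<forall>x'\<in>N_ext (\<alpha>,U). dist x' z < \<eta> \<longrightarrow> x' \<in> Oz"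
    using oOz zO unfolding N_top_open_iff by blast
  have "z \<in> closure (ran_c \<alpha>)" using N_ext_closure[OF eS z(1)] .
  then obtain z' where z': "z' \<in> ran_c \<alpha>" "dist z' z < \<eta>" using eta(1) closure_approachable by blast
  have "z' \<in> N_ext (\<alpha>,U)" using z'(1) by (simp add: N_ext_def)
  then have "z' \<in> Oz" using eta z'(2) by blast
  then obtain w' where w': "w' \<in> B2" "phi (\<alpha>,U) z' = phi (\<beta>,X) w'" and zb: "z' \<in> B1"
    unfolding Oz_def by blast
  show False
    using disj_interior[OF eS fS sepa z'(1) _ _ _ w'(2)] zb w'(1) unfolding B1_def B2_def
    by (auto simp: dist_commute)
qed

lemma Hausdorff_QM: "Hausdorff_space (Q_M A Q)"
  unfolding Hausdorff_space_def topspace_QM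
proof (intro allI impI)
  fix c1 c2 assume "c1 \<in> cls ` TT \<and> c2 \<in> cls ` TT \<and> c1 \<noteq> c2"
  then obtain u v where uv: "u \<in> TT" "v \<in> TT" "c1 = cls u" "c2 = cls v" "cls u \<noteq> cls v" by blast
  obtain \<alpha> U p where u: "u = ((\<alpha>,U),p)" by (metis prod.collapse)
  obtain \<beta> X q where v: "v = ((\<beta>,X),q)" by (metis prod.collapse)
  have nr: "\<not> rel2 u v" using uv cls_eq_iff by blast
  obtain \<epsilon> where eps: "\<epsilon> > 0"
    "\<forall>m\<in>dom_c \<alpha> \<inter> dom_c \<beta>. \<not> (dist (map_c \<alpha> m) p < \<epsilon> \<and> dist (map_c \<beta> m) q < \<epsilon>)"
    using sep[of \<alpha> U p \<beta> X q] uv nr u v by blast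
  have eS: "(\<alpha>,U) \<in> S_Q A Q" and pN: "p \<in> N_ext (\<alpha>,U)" using uv u by (auto simp: TT_eq)
  have fS: "(\<beta>,X) \<in> S_Q A Q" and qN: "q \<in> N_ext (\<beta>,X)" using uv v by (auto simp: TT_eq)
  have oB1: "openin (N_top (\<alpha>,U)) (N_ext (\<alpha>,U) \<inter> ball p \<epsilon>)" unfolding N_top_def by (rule openin_open_Int) simp
  have oB2: "openin (N_top (\<beta>,X)) (N_ext (\<beta>,X) \<inter> ball q \<epsilon>)" unfolding N_top_def by (rule openin_open_Int) simp
  show "\<exists>U' V'. openin (Q_M A Q) U' \<and> openin (Q_M A Q) V' \<and> c1 \<in> U' \<and> c2 \<in> V' \<and> disjnt U' V'"
  proof (intro exI conjI)
    show "openin (Q_M A Q) (phi (\<alpha>,U) ` (N_ext (\<alpha>,U) \<inter> ball p \<epsilon>))" using phi_open[OF eS oB1] .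
    show "openin (Q_M A Q) (phi (\<beta>,X) ` (N_ext (\<beta>,X) \<inter> ball q \<epsilon>))" using phi_open[OF fS oB2] .
    show "c1 \<in> phi (\<alpha>,U) ` (N_ext (\<alpha>,U) \<inter> ball p \<epsilon>)" using uv u pN eps(1) by (auto simp: phi_def)
    show "c2 \<in> phi (\<beta>,X) ` (N_ext (\<beta>,X) \<inter> ball q \<epsilon>)" using uv v qN eps(1) by (auto simp: phi_def)
    show "disjnt (phi (\<alpha>,U) ` (N_ext (\<alpha>,U) \<inter> ball p \<epsilon>)) (phi (\<beta>,X) ` (N_ext (\<beta>,X) \<inter> ball q \<epsilon>))"
      using disj_img[OF eS fS eps(2)] by (simp add: disjnt_def)
  qed
qed

end

lemma homeo_space:
  assumes "homeomorphism S T f g"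
  shows "top_of_set S homeomorphic_space top_of_set T"
  unfolding homeomorphic_space_def homeomorphic_maps_def
proof (intro exI conjI)
  show "continuous_map (top_of_set S) (top_of_set T) f"
    using assms unfolding homeomorphism_def by (auto simp: continuous_map_in_subtopology)
  show "continuous_map (top_of_set T) (top_of_set S) g"
    using assms unfolding homeomorphism_def by (auto simp: continuous_map_in_subtopology)
  show "\<forall>x\<in>topspace (top_of_set S). g (f x) = x" using assms unfolding homeomorphism_def by simp
  show "\<forall>y\<in>topspace (top_of_set T). f (g y) = y" using assms unfolding homeomorphism_def by simp
qed

lemma halfspace_swap:
  fixes k k0 :: "'n::finite"
  assumes V: "openin (top_of_set (halfspace k)) V"
  shows "\<exists>V'. openin (top_of_set (halfspace k0)) V' \<and> top_of_set V homeomorphic_space top_of_set V'"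
proof -
  define tr where "tr i = (if i = k then k0 else if i = k0 then k else i)" for i
  define sw :: "real^'n \<Rightarrow> real^'n" where "sw x = (\<chi> i. x $ tr i)" for x
  have trtr: "tr (tr i) = i" for i unfolding tr_def by auto
  have swsw: "sw (sw x) = x" for x unfolding sw_def by (simp add: vec_eq_iff trtr)
  have csw: "continuous_on UNIV sw" unfolding sw_def by (intro continuous_intros)
  have img: "sw ` S = sw -` S" for S
  proof
    show "sw ` S \<subseteq> sw -` S" using swsw by auto
    show "sw -` S \<subseteq> sw ` S" using swsw by (metis image_eqI subsetI vimageE)
  qed
  have hU: "homeomorphism UNIV UNIV sw sw"
    using csw swsw by (intro homeomorphismI) auto
  obtain O1 where O: "open O1" "V = halfspace k \<inter> O1" using V by (auto simp: openin_open)
  have hk: "sw -` halfspace k = halfspace k0"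
    unfolding halfspace_def sw_def tr_def by auto
  have "sw ` V = halfspace k0 \<inter> sw -` O1" unfolding img O(2) using hk by auto
  moreover have "open (sw -` O1)" using csw O(1) open_vimage by blast
  ultimately have "openin (top_of_set (halfspace k0)) (sw ` V)" by (auto simp: openin_open)
  moreover have "homeomorphism V (sw ` V) sw sw"
    by (rule homeomorphism_of_subsets[OF hU]) auto
  ultimately show ?thesis using homeo_space by blast
qed

lemma ball_local:
  fixes k0 :: "'n::finite" and S :: "(real^'n) set"
  assumes "open S" "x \<in> S"
  shows "\<exists>W. openin (top_of_set S) W \<and> x \<in> W \<and>
     (\<exists>V. openin (top_of_set (halfspace k0)) V \<and> subtopology (top_of_set S) W homeomorphic_space top_of_set (V :: (real^'n) set))"
proof -
  obtain r where r: "r > 0" "ball x r \<subseteq> S" using assms open_contains_ball_eq by blast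
  define c :: "real^'n" where "c = (\<chi> i. 2)"
  have sub: "ball c 1 \<subseteq> halfspace k0"
  proof
    fix y assume "y \<in> ball c 1"
    then have "norm (c - y) < 1" by (simp add: dist_norm)
    moreover have "\<bar>(c - y) $ k0\<bar> \<le> norm (c - y)" by (rule component_le_norm_cart)
    ultimately have "\<bar>2 - y $ k0\<bar> < 1" unfolding c_def by simp
    then show "y \<in> halfspace k0" unfolding halfspace_def by simp
  qed
  have oV: "openin (top_of_set (halfspace k0)) (ball c 1)"
    using sub by (auto simp: openin_open intro!: exI[of _ "ball c 1"])
  have "ball x r homeomorphic ball c 1" using homeomorphic_balls(1)[OF r(1), of 1] by simp
  then obtain f g where "homeomorphism (ball x r) (ball c 1) f g" unfolding homeomorphic_def by blast
  then have h: "top_of_set (ball x r) homeomorphic_space top_of_set (ball c 1)" by (rule homeo_space)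
  have "subtopology (top_of_set S) (ball x r) = top_of_set (ball x r)"
    using r(2) by (simp add: subtopology_subtopology Int_absorb1)
  moreover have "openin (top_of_set S) (ball x r)" using openin_open_eq[OF assms(1)] r(2) by simp
  ultimately show ?thesis using h oV r by (intro exI[of _ "ball x r"]) auto
qed

context qm begin

lemma phi_embed:
  assumes eS: "e \<in> S_Q A Q" and W: "openin (N_top e) W"
  shows "subtopology (N_top e) W homeomorphic_space subtopology (Q_M A Q) (phi e ` W)"
proof -
  obtain \<alpha> U where e: "e = (\<alpha>,U)" by (metis prod.collapse)
  have WN: "W \<subseteq> N_ext e" using openin_subset[OF W] by simp
  have ts: "topspace (subtopology (N_top e) W) = W" using WN by auto
  have "embedding_map (subtopology (N_top e) W) (Q_M A Q) (phi e)"
  proof (rule injective_open_imp_embedding_map)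
    show "continuous_map (subtopology (N_top e) W) (Q_M A Q) (phi e)"
      using phi_cont[OF eS] continuous_map_from_subtopology by blast
    show "open_map (subtopology (N_top e) W) (Q_M A Q) (phi e)"
      unfolding open_map_def using phi_open[OF eS] openin_open_subtopology[OF W] by blast
    show "inj_on (phi e) (topspace (subtopology (N_top e) W))"
      unfolding ts inj_on_def using phi_inj eS WN e by blast
  qed
  then show ?thesis unfolding embedding_map_def ts using homeomorphic_map_imp_homeomorphic_space by blast
qed

lemma local_chart:
  fixes k0 :: "'n"
  assumes c: "c \<in> topspace (Q_M A Q)"
  shows "\<exists>W. openin (Q_M A Q) W \<and> c \<in> W \<and>
     (\<exists>V. openin (top_of_set (halfspace k0)) V \<and> subtopology (Q_M A Q) W homeomorphic_space top_of_set V)"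
proof -
  obtain e x where ex: "(e,x) \<in> TT" "c = phi e x" using c unfolding topspace_QM phi_def by auto
  have eS: "e \<in> S_Q A Q" and xN: "x \<in> N_ext e" using ex(1) by (auto simp: TT_eq)
  obtain W V where W: "openin (N_top e) W" "x \<in> W" "openin (top_of_set (halfspace k0)) V"
     "subtopology (N_top e) W homeomorphic_space top_of_set V"
  proof (rule SQ_cases[OF eS])
    fix \<alpha> assume a: "\<alpha> \<in> A" "e = (\<alpha>, ran_c \<alpha>)"
    have Ne: "N_ext e = ran_c \<alpha>" using a rel_bdry_self by (simp add: N_ext_def)
    have "open (ran_c \<alpha>)" using chart_facts(2)[OF A_chart[OF a(1)]] .
    then show ?thesis using ball_local[of "ran_c \<alpha>" x k0] that xN Ne unfolding N_top_def by auto
  next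
    assume "e \<in> Q"
    then obtain k :: 'n where k: "\<forall>p \<in> topspace (N_top e). \<exists>W. openin (N_top e) W \<and> p \<in> W \<and>
        (\<exists>V. openin (top_of_set (halfspace k)) V \<and>
             subtopology (N_top e) W homeomorphic_space top_of_set V)"
      using mb unfolding manifold_with_boundary_def by blast
    then obtain W V where W: "openin (N_top e) W" "x \<in> W" "openin (top_of_set (halfspace k)) V"
        "subtopology (N_top e) W homeomorphic_space top_of_set V"
      using xN by auto
    obtain V' where V': "openin (top_of_set (halfspace k0)) V'" "top_of_set V homeomorphic_space top_of_set V'"
      using halfspace_swap[OF W(3)] by blast
    show ?thesis using that[OF W(1,2) V'(1)] W(4) V'(2) homeomorphic_space_trans by blast
  qed
  show ?thesis
  proof (intro exI conjI)
    show "openin (Q_M A Q) (phi e ` W)" using phi_open[OF eS W(1)] .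
    show "c \<in> phi e ` W" using ex W(2) by blast
    show "openin (top_of_set (halfspace k0)) V" using W(3) .
    show "subtopology (Q_M A Q) (phi e ` W) homeomorphic_space top_of_set V"
      using phi_embed[OF eS W(1)] W(4) homeomorphic_space_sym homeomorphic_space_trans by blast
  qed
qed

end

context qm begin

lemma countable_cover_charts: "\<exists>C. C \<subseteq> A \<and> countable C \<and> (\<forall>m. \<exists>\<gamma>\<in>C. m \<in> dom_c \<gamma>)"
proof -
  have "\<And>S. S \<in> dom_c ` A \<Longrightarrow> open S" using A_chart chart_facts(1) by blast
  then obtain F where F: "F \<subseteq> dom_c ` A" "countable F" "\<Union>F = \<Union>(dom_c ` A)"
    using Lindelof by metis
  define ch where "ch D = (SOME \<gamma>. \<gamma> \<in> A \<and> dom_c \<gamma> = D)" for D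
  have ch: "D \<in> F \<Longrightarrow> ch D \<in> A \<and> dom_c (ch D) = D" for D
    unfolding ch_def using F(1) by (metis (mono_tags, lifting) imageE someI subsetD)
  show ?thesis
  proof (intro exI conjI allI)
    show "ch ` F \<subseteq> A" using ch by blast
    show "countable (ch ` F)" using F(2) by simp
    fix m
    obtain \<alpha> where "\<alpha> \<in> A" "m \<in> dom_c \<alpha>" using A_cover by blast
    then obtain D where "D \<in> F" "m \<in> D" using F(3) by blast
    then show "\<exists>\<gamma>\<in>ch ` F. m \<in> dom_c \<gamma>" using ch by blast
  qed
qed

lemma second_countable_QM: "second_countable (Q_M A Q)"
proof -
  obtain C where C: "C \<subseteq> A" "countable C" "\<And>m. \<exists>\<gamma>\<in>C. m \<in> dom_c \<gamma>"
    using countable_cover_charts by blast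
  define E where "E = (\<lambda>\<alpha>. (\<alpha>, ran_c \<alpha>)) ` C \<union> Q"
  have cE: "countable E" unfolding E_def using C(2) cQ by simp
  have ES: "E \<subseteq> S_Q A Q" unfolding E_def S_Q_def using C(1) by blast
  have "\<forall>e::('a,'n) chart \<times> (real^'n) set. \<exists>B. countable B \<and> (\<forall>V\<in>B. openin (N_top e) V) \<and>
             (\<forall>U x. openin (N_top e) U \<and> x \<in> U \<longrightarrow> (\<exists>V\<in>B. x \<in> V \<and> V \<subseteq> U))"
  proof
    fix e
    have "second_countable (N_top e)" unfolding N_top_def
      by (rule second_countable_subtopology[OF second_countable_euclidean])
    then show "\<exists>B. countable B \<and> (\<forall>V\<in>B. openin (N_top e) V) \<and>
             (\<forall>U x. openin (N_top e) U \<and> x \<in> U \<longrightarrow> (\<exists>V\<in>B. x \<in> V \<and> V \<subseteq> U))"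
      unfolding second_countable_def by blast
  qed
  then have "\<exists>Bs. \<forall>e::('a,'n) chart \<times> (real^'n) set. countable (Bs e) \<and> (\<forall>V\<in>Bs e. openin (N_top e) V) \<and>
             (\<forall>U x. openin (N_top e) U \<and> x \<in> U \<longrightarrow> (\<exists>V\<in>Bs e. x \<in> V \<and> V \<subseteq> U))"
    by (rule choice)
  then obtain Bs where Bs0: "\<forall>e::('a,'n) chart \<times> (real^'n) set. countable (Bs e) \<and> (\<forall>V\<in>Bs e. openin (N_top e) V) \<and>
             (\<forall>U x. openin (N_top e) U \<and> x \<in> U \<longrightarrow> (\<exists>V\<in>Bs e. x \<in> V \<and> V \<subseteq> U))"
    by blast
  have Bs: "\<And>e. countable (Bs e)" "\<And>e V. V \<in> Bs e \<Longrightarrow> openin (N_top e) V"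
     "\<And>e U x. openin (N_top e) U \<Longrightarrow> x \<in> U \<Longrightarrow> (\<exists>V\<in>Bs e. x \<in> V \<and> V \<subseteq> U)"
    using Bs0 by blast+
  define \<B> where "\<B> = (\<Union>e\<in>E. (\<lambda>b. phi e ` b) ` Bs e)"
  show ?thesis unfolding second_countable_def
  proof (intro exI conjI ballI allI impI)
    show "countable \<B>" unfolding \<B>_def using cE Bs(1) by blast
    fix V assume "V \<in> \<B>"
    then show "openin (Q_M A Q) V" unfolding \<B>_def using phi_open Bs(2) ES by blast
  next
    fix W c assume Wc: "openin (Q_M A Q) W \<and> c \<in> W"
    then have "c \<in> topspace (Q_M A Q)" using openin_subset by blast
    then obtain e' x where ex: "(e',x) \<in> TT" "c = cls (e',x)" unfolding topspace_QM by auto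
    obtain \<alpha> U where e': "e' = (\<alpha>,U)" by (metis prod.collapse)
    have e'S: "(\<alpha>,U) \<in> S_Q A Q" using ex(1) e' by (simp add: TT_eq)
    obtain e z where ez: "e \<in> E" "z \<in> N_ext e" "c = phi e z"
    proof (cases "x \<in> ran_c \<alpha>")
      case True
      note ca = chart_facts[OF A_chart[OF SQ_facts(1)[OF e'S]]]
      define m where "m = pt \<alpha> x"
      obtain \<gamma> where g: "\<gamma> \<in> C" "m \<in> dom_c \<gamma>" using C(3) by blast
      have gA: "\<gamma> \<in> A" using g C(1) by blast
      note cg = chart_facts[OF A_chart[OF gA]]
      have gS: "(\<gamma>, ran_c \<gamma>) \<in> S_Q A Q" unfolding S_Q_def using gA by blast
      have zr: "map_c \<gamma> m \<in> ran_c \<gamma>" using cg(6) g(2) by simp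
      then have zN: "map_c \<gamma> m \<in> N_ext (\<gamma>, ran_c \<gamma>)" by (simp add: N_ext_def)
      have "rel2 ((\<alpha>,U),x) ((\<gamma>, ran_c \<gamma>), map_c \<gamma> m)"
        unfolding rel2_simp using True zr cg(5) g(2) m_def by simp
      then have "c = phi (\<gamma>, ran_c \<gamma>) (map_c \<gamma> m)"
        using cls_eq_iff ex e' in_TT[OF gS zN] unfolding phi_def by blast
      moreover have "(\<gamma>, ran_c \<gamma>) \<in> E" unfolding E_def using g(1) by blast
      ultimately show ?thesis using that zN by blast
    next
      case False
      then have "x \<in> rel_bdry U (ran_c \<alpha>)" using ex(1) e' TT_iff by blast
      then have "(\<alpha>,U) \<in> Q" using SQ_bdry(6)[OF e'S] by blast
      then have "(\<alpha>,U) \<in> E" unfolding E_def by blast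
      moreover have "x \<in> N_ext (\<alpha>,U)" using ex(1) e' by (simp add: TT_eq)
      ultimately show ?thesis using that ex(2) e' unfolding phi_def by blast
    qed
    have eS: "e \<in> S_Q A Q" using ez(1) ES by blast
    define G where "G = {y \<in> topspace (N_top e). phi e y \<in> W}"
    have oG: "openin (N_top e) G" unfolding G_def
      using openin_continuous_map_preimage[OF phi_cont[OF eS]] Wc by blast
    have zG: "z \<in> G" unfolding G_def using ez Wc by simp
    obtain b where b: "b \<in> Bs e" "z \<in> b" "b \<subseteq> G" using Bs(3)[OF oG zG] by blast
    show "\<exists>V\<in>\<B>. c \<in> V \<and> V \<subseteq> W"
    proof (intro bexI conjI)
      show "phi e ` b \<in> \<B>" unfolding \<B>_def using ez(1) b(1) by blast
      show "c \<in> phi e ` b" using ez(3) b(2) by blast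
      show "phi e ` b \<subseteq> W" using b(3) unfolding G_def by blast
    qed
  qed
qed

lemma manifold_QM: "manifold_with_boundary TYPE('n) (Q_M A Q)"
  unfolding manifold_with_boundary_def
  using Hausdorff_QM second_countable_QM local_chart by blast

end

theorem mainTheorem9:
  fixes A :: "('a::{t2_space, second_countable_topology}, 'n::finite) chart set"
    and Q :: "(('a, 'n) chart \<times> (real^'n) set) set"
  assumes "maximal_smooth_atlas A"
    and "Q \<subseteq> EXT A"
    and "countable Q"
    and "pairwise compatible_ext Q"
    and "\<forall>e\<in>Q. manifold_with_boundary TYPE('n) (N_top e)"
  shows "manifold_with_boundary TYPE('n) (Q_M A Q)"
proof -
  interpret qm A Q using assms by unfold_locales
  show ?thesis by (rule manifold_QM)
qed

end
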